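(* Let $\mathcal{P}\subset\mathbb{R}^d$ be a finite set of item vectors, $\bm{q}\in\mathbb{R}^d\setminus\{\bm{0}\}$, $k>1$ an integer, $\lambda\in[0,1]$, $\mu>0$, and assume $\langle\bm{x},\bm{y}\rangle\ge0$ for all $\bm{x},\bm{y}\in\mathcal{P}\cup\{\bm{q}\}$. Let $\mathcal{N}\subseteq\mathcal{P}$ be nonempty with center $\bm{c}=\frac{1}{|\mathcal{N}|}\sum_{\bm{p}\in\mathcal{N}}\bm{p}\neq\bm{0}$, let $\theta\in[0,\pi]$ be the angle between $\bm{c}$ and $\bm{q}$, and for each nonzero $\bm{p}\in\mathcal{N}$ let $\varphi_{\bm{p}}\in[0,\pi]$ be the angle between $\bm{p}$ and $\bm{c}$. Then for every such $\bm{p}$, every $\mathcal{S}\subseteq\mathcal{P}$, and $\Delta_f$ equal to either $\Delta_{f_{avg}}$ or $\Delta_{f_{max}}$, $$\Delta_f(\bm{p},\mathcal{S})\le\tfrac{\lambda}{k}\,\|\bm{p}\|\,\|\bm{q}\|\cos(|\theta-\varphi_{\bm{p}}|).$$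
   Context: $\Delta_{f_{avg}}(\bm{p},\mathcal{S}) = \frac{\lambda}{k}\langle\bm{p},\bm{q}\rangle - \frac{2\mu(1-\lambda)}{k(k-1)}\sum_{\bm{p}'\in\mathcal{S}}\langle\bm{p},\bm{p}'\rangle$ and $\Delta_{f_{max}}(\bm{p},\mathcal{S}) = \frac{\lambda}{k}\langle\bm{p},\bm{q}\rangle - \mu(1-\lambda)\big(\max_{\bm{p}_x\ne\bm{p}_y\in\mathcal{S}\cup\{\bm{p}\}}\langle\bm{p}_x,\bm{p}_y\rangle - \max_{\bm{p}_x\ne\bm{p}_y\in\mathcal{S}}\langle\bm{p}_x,\bm{p}_y\rangle\big)$, where a maximum over an empty collection of pairs is taken to be $0$. The set $\mathcal{N}$ plays the role of a leaf node of a ball-cone tree (BC-Tree) storing, for each item, its norm and its angle to the node center. *)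

theory Defs
  imports "HOL-Analysis.Analysis"
begin

definition vec_angle :: "'a::real_inner \<Rightarrow> 'a \<Rightarrow> real" where
  "vec_angle x y = arccos ((x \<bullet> y) / (norm x * norm y))"

definition max_pair_ip :: "'a::real_inner set \<Rightarrow> real" where
  "max_pair_ip A = (if \<exists>x\<in>A. \<exists>y\<in>A. x \<noteq> y
     then Max {x \<bullet> y | x y. x \<in> A \<and> y \<in> A \<and> x \<noteq> y} else 0)"

definition delta_avg :: "real \<Rightarrow> real \<Rightarrow> nat \<Rightarrow> 'a::real_inner \<Rightarrow> 'a \<Rightarrow> 'a set \<Rightarrow> real" where
  "delta_avg lam mu k q p S =
     lam / real k * (p \<bullet> q)
     - 2 * mu * (1 - lam) / (real k * (real k - 1)) * (\<Sum>p'\<in>S. p \<bullet> p')"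

definition delta_max :: "real \<Rightarrow> real \<Rightarrow> nat \<Rightarrow> 'a::real_inner \<Rightarrow> 'a \<Rightarrow> 'a set \<Rightarrow> real" where
  "delta_max lam mu k q p S =
     lam / real k * (p \<bullet> q)
     - mu * (1 - lam) * (max_pair_ip (insert p S) - max_pair_ip S)"

end

theory Submission
  imports Defs
begin
lemma angle_bound:
  fixes x y z :: "'a::real_inner"
  assumes "x \<noteq> 0" "y \<noteq> 0" "z \<noteq> 0"
  shows "x \<bullet> y \<le> norm x * norm y * cos (vec_angle z y - vec_angle x z)"
proof -
  define w where "w = z /\<^sub>R norm z"
  have nw: "norm w = 1" using assms by (simp add: w_def field_simps)
  have ww: "w \<bullet> w = 1" using nw by (simp add: dot_square_norm)
  have A: "(z \<bullet> y)/(norm z*norm y) = (w \<bullet> y)/norm y" using assms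
    by (simp add: w_def field_simps)
  have B: "(x \<bullet> z)/(norm x*norm z) = (x \<bullet> w)/norm x" using assms
    by (simp add: w_def field_simps)
  have bA: "\<bar>(w \<bullet> y)/norm y\<bar> \<le> 1" using Cauchy_Schwarz_ineq2[of w y] nw assms
    by (simp add: abs_div divide_le_eq_1)
  have bB: "\<bar>(x \<bullet> w)/norm x\<bar> \<le> 1" using Cauchy_Schwarz_ineq2[of x w] nw assms
    by (simp add: abs_div divide_le_eq_1)
  define xp where "xp = x - (x \<bullet> w) *\<^sub>R w"
  define yp where "yp = y - (y \<bullet> w) *\<^sub>R w"
  have nxp: "(norm xp)^2 = (norm x)^2 - (x \<bullet> w)^2"
    unfolding xp_def power2_norm_eq_inner using ww
    by (simp add: inner_diff_left inner_diff_right inner_commute power2_eq_square algebra_simps)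
  have nyp: "(norm yp)^2 = (norm y)^2 - (y \<bullet> w)^2"
    unfolding yp_def power2_norm_eq_inner using ww
    by (simp add: inner_diff_left inner_diff_right inner_commute power2_eq_square algebra_simps)
  have sx: "norm x * sqrt (1 - ((x \<bullet> w)/norm x)^2) = norm xp"
  proof -
    have "norm x * sqrt (1 - ((x \<bullet> w)/norm x)^2) = sqrt ((norm x)^2 * (1 - ((x \<bullet> w)/norm x)^2))"
      by (simp add: real_sqrt_mult)
    also have "(norm x)^2 * (1 - ((x \<bullet> w)/norm x)^2) = (norm xp)^2"
      using nxp assms by (simp add: power_divide right_diff_distrib)
    finally show ?thesis by simp
  qed
  have sy: "norm y * sqrt (1 - ((w \<bullet> y)/norm y)^2) = norm yp"
  proof -
    have "norm y * sqrt (1 - ((w \<bullet> y)/norm y)^2) = sqrt ((norm y)^2 * (1 - ((w \<bullet> y)/norm y)^2))"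
      by (simp add: real_sqrt_mult)
    also have "(norm y)^2 * (1 - ((w \<bullet> y)/norm y)^2) = (norm yp)^2"
      using nyp assms by (simp add: power_divide right_diff_distrib inner_commute)
    finally show ?thesis by simp
  qed
  have dec: "x \<bullet> y = (x \<bullet> w) * (w \<bullet> y) + xp \<bullet> yp"
    unfolding xp_def yp_def using ww
    by (simp add: inner_diff_left inner_diff_right inner_commute algebra_simps)
  have cs: "xp \<bullet> yp \<le> norm xp * norm yp" by (rule norm_cauchy_schwarz)
  have "norm x * norm y * cos (vec_angle z y - vec_angle x z)
     = norm x * norm y * (((w \<bullet> y)/norm y) * ((x \<bullet> w)/norm x)
        + sqrt (1 - ((w \<bullet> y)/norm y)^2) * sqrt (1 - ((x \<bullet> w)/norm x)^2))"
  proof -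
    have c1: "cos (arccos ((w \<bullet> y)/norm y)) = (w \<bullet> y)/norm y"
      using bA by (meson abs_le_D1 abs_le_D2 cos_arccos minus_le_iff)
    have c2: "cos (arccos ((x \<bullet> w)/norm x)) = (x \<bullet> w)/norm x"
      using bB by (meson abs_le_D1 abs_le_D2 cos_arccos minus_le_iff)
    have s1: "sin (arccos ((w \<bullet> y)/norm y)) = sqrt (1 - ((w \<bullet> y)/norm y)^2)"
      using bA by (rule sin_arccos_abs)
    have s2: "sin (arccos ((x \<bullet> w)/norm x)) = sqrt (1 - ((x \<bullet> w)/norm x)^2)"
      using bB by (rule sin_arccos_abs)
    show ?thesis unfolding vec_angle_def A B cos_diff c1 c2 s1 s2 ..
  qed
  also have "\<dots> = (x \<bullet> w) * (w \<bullet> y) + (norm x * sqrt (1 - ((x \<bullet> w)/norm x)^2)) * (norm y * sqrt (1 - ((w \<bullet> y)/norm y)^2))"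
    using assms by (simp add: field_simps)
  also have "\<dots> = (x \<bullet> w) * (w \<bullet> y) + norm xp * norm yp" using sx sy by simp
  finally show ?thesis using dec cs by simp
qed

lemma max_pair_mono:
  fixes A B :: "'a::real_inner set"
  assumes "finite B" "A \<subseteq> B" "\<forall>x\<in>B. \<forall>y\<in>B. x \<bullet> y \<ge> 0"
  shows "max_pair_ip A \<le> max_pair_ip B"
proof -
  let ?M = "\<lambda>A. {x \<bullet> y | x y. x \<in> A \<and> y \<in> A \<and> x \<noteq> y}"
  have fin: "finite (?M B)"
  proof -
    have "?M B = (\<lambda>(x,y). x \<bullet> y) ` {(x,y). x \<in> B \<and> y \<in> B \<and> x \<noteq> y}" by auto
    moreover have "finite {(x,y). x \<in> B \<and> y \<in> B \<and> x \<noteq> y}"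
      by (rule finite_subset[of _ "B \<times> B"]) (use assms in auto)
    ultimately show ?thesis by simp
  qed
  show ?thesis
  proof (cases "\<exists>x\<in>A. \<exists>y\<in>A. x \<noteq> y")
    case True
    then obtain x y where xy: "x \<in> A" "y \<in> A" "x \<noteq> y" by blast
    have ne: "?M A \<noteq> {}" using xy by blast
    have sub: "?M A \<subseteq> ?M B" using assms(2) by blast
    have "Max (?M A) \<le> Max (?M B)"
      using fin sub ne by (meson Max_mono)
    moreover have "\<exists>x\<in>B. \<exists>y\<in>B. x \<noteq> y" using xy assms(2) by blast
    ultimately show ?thesis using True unfolding max_pair_ip_def by simp
  next
    case False
    then have "max_pair_ip A = 0" unfolding max_pair_ip_def by simp
    moreover have "0 \<le> max_pair_ip B"
    proof (cases "\<exists>x\<in>B. \<exists>y\<in>B. x \<noteq> y")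
      case True
      then obtain x y where xy: "x \<in> B" "y \<in> B" "x \<noteq> y" by blast
      then have "x \<bullet> y \<in> ?M B" by blast
      then have "x \<bullet> y \<le> Max (?M B)" using fin by simp
      moreover have "0 \<le> x \<bullet> y" using assms(3) xy by blast
      ultimately show ?thesis using True unfolding max_pair_ip_def by simp
    qed (simp add: max_pair_ip_def)
    ultimately show ?thesis by simp
  qed
qed

theorem theorem5:
  fixes P N S :: "(real ^ 'd) set" and q p :: "real ^ 'd"
    and k :: nat and lam mu :: real
    and \<Delta> :: "real \<Rightarrow> real \<Rightarrow> nat \<Rightarrow> real ^ 'd \<Rightarrow> real ^ 'd \<Rightarrow> (real ^ 'd) set \<Rightarrow> real"
  assumes "finite P" and "q \<noteq> 0" and "k > 1"
    and "0 \<le> lam" and "lam \<le> 1" and "mu > 0"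
    and "\<forall>x\<in>insert q P. \<forall>y\<in>insert q P. x \<bullet> y \<ge> 0"
    and "N \<subseteq> P" and "N \<noteq> {}"
    and "(1 / real (card N)) *\<^sub>R (\<Sum>p'\<in>N. p') \<noteq> 0"
    and "p \<in> N" and "p \<noteq> 0"
    and "S \<subseteq> P"
    and "\<Delta> = delta_avg \<or> \<Delta> = delta_max"
  shows "let c = (1 / real (card N)) *\<^sub>R (\<Sum>p'\<in>N. p');
             \<theta> = vec_angle c q;
             \<phi> = vec_angle p c
         in \<Delta> lam mu k q p S \<le> lam / real k * norm p * norm q * cos \<bar>\<theta> - \<phi>\<bar>"
proof -
  define c where "c = (1 / real (card N)) *\<^sub>R (\<Sum>p'\<in>N. p')"
  have pP: "p \<in> P" using assms by blast
  have nonneg: "\<forall>x\<in>P. \<forall>y\<in>P. x \<bullet> y \<ge> 0" using assms(7) by blast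
  have k0: "real k > 1" using assms(3) by simp
  have D: "\<Delta> lam mu k q p S \<le> lam / real k * (p \<bullet> q)"
    using assms(14)
  proof
    assume "\<Delta> = delta_avg"
    have s: "0 \<le> (\<Sum>p'\<in>S. p \<bullet> p')" using nonneg pP assms(13) by (intro sum_nonneg) blast
    have "0 \<le> 2 * mu * (1 - lam) / (real k * (real k - 1))"
      using assms(5,6) k0 by (intro divide_nonneg_pos mult_nonneg_nonneg) auto
    with s have "0 \<le> 2 * mu * (1 - lam) / (real k * (real k - 1)) * (\<Sum>p'\<in>S. p \<bullet> p')"
      by (rule mult_nonneg_nonneg[rotated])
    then show ?thesis using \<open>\<Delta> = delta_avg\<close> unfolding delta_avg_def by simp
  next
    assume "\<Delta> = delta_max"
    have "max_pair_ip S \<le> max_pair_ip (insert p S)"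
      by (rule max_pair_mono) (use assms(1,13) pP nonneg in \<open>auto intro: finite_subset\<close>)
    then have "0 \<le> mu * (1 - lam) * (max_pair_ip (insert p S) - max_pair_ip S)"
      using assms(5,6) by simp
    then show ?thesis using \<open>\<Delta> = delta_max\<close> unfolding delta_max_def by simp
  qed
  have "p \<bullet> q \<le> norm p * norm q * cos (vec_angle c q - vec_angle p c)"
    using angle_bound[of p q c] assms(2,10,12) c_def by simp
  then have "lam / real k * (p \<bullet> q) \<le> lam / real k * (norm p * norm q * cos (vec_angle c q - vec_angle p c))"
    using assms(4) k0 by (intro mult_left_mono) auto
  moreover have "cos \<bar>vec_angle c q - vec_angle p c\<bar> = cos (vec_angle c q - vec_angle p c)"
    by (metis abs_minus_commute abs_of_nonneg abs_ge_zero cos_minus minus_diff_eq abs_if)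
  ultimately show ?thesis using D unfolding c_def[symmetric] Let_def by simp
qed

end
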